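(* Let $\Phi$ be a law and $\Theta$ an action theory. If $\Theta$ is modular, then every $\Theta'\in\Theta\ominus\Phi$ is modular.
   Context: Fix a finite set $\mathrm{Act}$ of atomic actions and a finite set $\mathrm{Prop}$ of atoms; $\mathrm{Lit}$ is the set of literals. Boolean formulas are classical propositional formulas over $\mathrm{Prop}$, $\models_{CPL}$ classical consequence. Modal formulas are built from Boolean formulas with the Boolean connectives and $[a]$ ($a\in\mathrm{Act}$); $\langle a\rangle\Phi:=\neg[a]\neg\Phi$. A PDL-model is $\langle W,R\rangle$, $W$ a set of valuations (maximal consistent sets of literals), $R_a\subseteq W\times W$ for each $a$; truth is standard; a model satisfies a formula iff it holds at all worlds; $\Sigma\models_{PDL}\Phi$ iff every model of $\Sigma$ is a model of $\Phi$. A static law is a Boolean formula; an effect law for $a$ is $\varphi\to[a]\psi$; an executability law for $a$ is $\varphi\to\langle a\rangle\top$ ($\varphi,\psi$ Boolean); a law is any of these. An action theory is a finite set $\Theta=S\cup E\cup X$ of static, effect and executability laws; $E_a,X_a$ are those about $a$. $\Theta$ is modular iff for every Boolean $\varphi$, $\Theta\models_{PDL}\varphi$ implies $S\models_{CPL}\varphi$ (with $S$ the static laws of $\Theta$). Syntactic contraction $\Theta\ominus\Phi$ (a set of action theories). Notation: $\bigwedge S$ is the conjunction of $S$; $IP(\chi)$ is the set of prime implicants of $\chi$; for a term $\tau$, $\mathrm{atm}(\tau)$ is its set of atoms, and for $A\subseteq\mathrm{Prop}\setminus\mathrm{atm}(\tau)$, $\varphi_A:=\bigwedge_{p\in A}p\wedge\bigwedge_{p\in\mathrm{Prop}\setminus(\mathrm{atm}(\tau)\cup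 A)}\neg p$. (1) Executability law $\varphi\to\langle a\rangle\top$: if $\Theta\not\models_{PDL}\varphi\to\langle a\rangle\top$ the result is $\{\Theta\}$; otherwise it consists of the theories $(\Theta\setminus X_a)\cup\{(\varphi_i\wedge\neg(\tau\wedge\varphi_A))\to\langle a\rangle\top:\varphi_i\to\langle a\rangle\top\in X_a\}$ for all $\tau\in IP(\bigwedge S\wedge\varphi)$ and $A\subseteq\mathrm{Prop}\setminus\mathrm{atm}(\tau)$ with $S\not\models_{CPL}\neg(\tau\wedge\varphi_A)$. (2) Effect law $\varphi\to[a]\psi$: if $\Theta\not\models_{PDL}\varphi\to[a]\psi$ the result is $\{\Theta\}$; otherwise let $E^-_a$ be the union of all minimal $E'\subseteq E_a$ with $S\cup E'\models_{PDL}\varphi\to[a]\psi$. For every $\tau\in IP(\bigwedge S\wedge\varphi)$, $A\subseteq\mathrm{Prop}\setminus\mathrm{atm}(\tau)$ with $S\not\models_{CPL}\neg(\tau\wedge\varphi_A)$, and $\tau'\in IP(\bigwedge S\wedge\neg\psi)$, the result contains $(\Theta\setminus E^-_a)\cup\{(\varphi_i\wedge\neg(\tau\wedge\varphi_A))\to[a]\psi_i:\varphi_i\to[a]\psi_i\in E^-_a\}\cup\{(\varphi_i\wedge\tau\wedge\varphi_A)\to[a](\psi_i\vee\tau'):\varphi_i\to[a]\psi_i\in E^-_a\}\cup\{(\tau\wedge\varphi_A\wedge\ell)\to[a](\psi\vee\ell):\ell\in L$ for some $L\subseteq\mathrm{Lit}$ with $S\models_{CPL}(\tau\wedge\varphi_A)\to\bigwedge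 L$, $S\not\models_{CPL}\neg(\tau'\wedge\bigwedge L)$, and ($\Theta\not\models_{PDL}(\tau\wedge\varphi_A\wedge\ell)\to[a]\neg\ell$ or $\ell$ is a literal of $\tau'$)$\}$. (3) Static law $\varphi$: if $S\not\models_{CPL}\varphi$ the result is $\{\Theta\}$; otherwise, for every $S^-\in S\ominus\varphi$ (a given classical contraction operator, assumed to behave like a Katsuno–Mendelzon contraction, in particular $S\models_{CPL}\bigwedge S^-$, and to be sound, complete and minimal w.r.t. its semantics), the result contains the theory obtained from $(\Theta\setminus S)\cup S^-$ by replacing, for each action $a$, $X_a$ by $\{(\varphi_i\wedge\varphi)\to\langle a\rangle\top:\varphi_i\to\langle a\rangle\top\in X_a\}$ and adding $\neg\varphi\to[a]\bot$; its set of static laws is $S^-$. *)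

theory Defs
  imports Main
begin

text \<open>Atoms have a finite type 'p (Prop), actions a finite type 'a (Act).
  Boolean formulas are the box-free modal formulas.\<close>

datatype ('p, 'a) fm =
    Atom 'p
  | FBot
  | FTop
  | Neg "('p, 'a) fm"
  | And "('p, 'a) fm" "('p, 'a) fm"
  | Or "('p, 'a) fm" "('p, 'a) fm"
  | Imp "('p, 'a) fm" "('p, 'a) fm"
  | Box 'a "('p, 'a) fm"

definition Dia :: "'a \<Rightarrow> ('p, 'a) fm \<Rightarrow> ('p, 'a) fm" where
  "Dia a f = Neg (Box a (Neg f))"

fun is_bool :: "('p, 'a) fm \<Rightarrow> bool" where
  "is_bool (Atom p) = True"
| "is_bool FBot = True"
| "is_bool FTop = True"
| "is_bool (Neg f) = is_bool f"
| "is_bool (And f g) = (is_bool f \<and> is_bool g)"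
| "is_bool (Or f g) = (is_bool f \<and> is_bool g)"
| "is_bool (Imp f g) = (is_bool f \<and> is_bool g)"
| "is_bool (Box a f) = False"

definition Conj :: "('p, 'a) fm set \<Rightarrow> ('p, 'a) fm" where
  "Conj S = foldr And (SOME xs. set xs = S) FTop"

text \<open>Worlds are valuations ('p => bool), i.e. maximal consistent sets of literals.\<close>
type_synonym 'p val = "'p \<Rightarrow> bool"

fun sat :: "('a \<Rightarrow> ('p val \<times> 'p val) set) \<Rightarrow> 'p val \<Rightarrow> ('p, 'a) fm \<Rightarrow> bool" where
  "sat R w (Atom p) = w p"
| "sat R w FBot = False"
| "sat R w FTop = True"
| "sat R w (Neg f) = (\<not> sat R w f)"
| "sat R w (And f g) = (sat R w f \<and> sat R w g)"
| "sat R w (Or f g) = (sat R w f \<or> sat R w g)"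
| "sat R w (Imp f g) = (sat R w f \<longrightarrow> sat R w g)"
| "sat R w (Box a f) = (\<forall>v. (w, v) \<in> R a \<longrightarrow> sat R v f)"

definition is_model :: "'p val set \<Rightarrow> ('a \<Rightarrow> ('p val \<times> 'p val) set) \<Rightarrow> bool" where
  "is_model W R = (\<forall>a. R a \<subseteq> W \<times> W)"

definition valid_in :: "'p val set \<Rightarrow> ('a \<Rightarrow> ('p val \<times> 'p val) set) \<Rightarrow> ('p, 'a) fm \<Rightarrow> bool" where
  "valid_in W R f = (\<forall>w\<in>W. sat R w f)"

definition pdl_entails :: "('p, 'a) fm set \<Rightarrow> ('p, 'a) fm \<Rightarrow> bool" where
  "pdl_entails \<Sigma> f = (\<forall>W R. is_model W R \<longrightarrow> (\<forall>s\<in>\<Sigma>. valid_in W R s) \<longrightarrow> valid_in W R f)"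

definition bsat :: "'p val \<Rightarrow> ('p, 'a) fm \<Rightarrow> bool" where
  "bsat v f = sat (\<lambda>_. {}) v f"

definition cpl_entails :: "('p, 'a) fm set \<Rightarrow> ('p, 'a) fm \<Rightarrow> bool" where
  "cpl_entails S f = (\<forall>v. (\<forall>s\<in>S. bsat v s) \<longrightarrow> bsat v f)"

definition vals :: "('p, 'a) fm set \<Rightarrow> 'p val set" where
  "vals S = {v. \<forall>s\<in>S. bsat v s}"

datatype ('p, 'a) law =
    Stat "('p, 'a) fm"
  | Eff "('p, 'a) fm" 'a "('p, 'a) fm"
  | Exe "('p, 'a) fm" 'a

fun law_fm :: "('p, 'a) law \<Rightarrow> ('p, 'a) fm" where
  "law_fm (Stat f) = f"
| "law_fm (Eff f a g) = Imp f (Box a g)"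
| "law_fm (Exe f a) = Imp f (Dia a FTop)"

fun wf_law :: "('p, 'a) law \<Rightarrow> bool" where
  "wf_law (Stat f) = is_bool f"
| "wf_law (Eff f a g) = (is_bool f \<and> is_bool g)"
| "wf_law (Exe f a) = is_bool f"

definition action_theory :: "('p, 'a) law set \<Rightarrow> bool" where
  "action_theory \<Theta> = (finite \<Theta> \<and> (\<forall>l\<in>\<Theta>. wf_law l))"

definition statics :: "('p, 'a) law set \<Rightarrow> ('p, 'a) fm set" where
  "statics \<Theta> = {f. Stat f \<in> \<Theta>}"

definition effs :: "('p, 'a) law set \<Rightarrow> 'a \<Rightarrow> ('p, 'a) law set" where
  "effs \<Theta> a = {l\<in>\<Theta>. \<exists>f g. l = Eff f a g}"

definition exes :: "('p, 'a) law set \<Rightarrow> 'a \<Rightarrow> ('p, 'a) law set" where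
  "exes \<Theta> a = {l\<in>\<Theta>. \<exists>f. l = Exe f a}"

definition th_entails :: "('p, 'a) law set \<Rightarrow> ('p, 'a) fm \<Rightarrow> bool" where
  "th_entails \<Theta> f = pdl_entails (law_fm ` \<Theta>) f"

definition modular :: "('p, 'a) law set \<Rightarrow> bool" where
  "modular \<Theta> = (\<forall>f. is_bool f \<longrightarrow> th_entails \<Theta> f \<longrightarrow> cpl_entails (statics \<Theta>) f)"

type_synonym 'p lit = "'p \<times> bool"

fun lit_fm :: "'p lit \<Rightarrow> ('p, 'a) fm" where
  "lit_fm (p, b) = (if b then Atom p else Neg (Atom p))"

definition term_fm :: "'p lit set \<Rightarrow> ('p, 'a) fm" where
  "term_fm T = Conj (lit_fm ` T)"

definition consistent_term :: "'p lit set \<Rightarrow> bool" where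
  "consistent_term T = (\<forall>p. \<not> ((p, True) \<in> T \<and> (p, False) \<in> T))"

definition term_implies :: "'p lit set \<Rightarrow> ('p, 'a) fm \<Rightarrow> bool" where
  "term_implies T f = (\<forall>v. (\<forall>l\<in>T. bsat v (lit_fm l :: ('p, 'a) fm)) \<longrightarrow> bsat v f)"

definition IP :: "('p, 'a) fm \<Rightarrow> 'p lit set set" where
  "IP f = {T. consistent_term T \<and> term_implies T f \<and> (\<forall>T'. T' \<subset> T \<longrightarrow> \<not> term_implies T' f)}"

definition atm :: "'p lit set \<Rightarrow> 'p set" where
  "atm T = fst ` T"

definition phiA :: "'p lit set \<Rightarrow> 'p set \<Rightarrow> 'p lit set" where
  "phiA T A = (\<lambda>p. (p, True)) ` A \<union> (\<lambda>p. (p, False)) ` (UNIV - (atm T \<union> A))"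

definition tphi :: "'p lit set \<Rightarrow> 'p set \<Rightarrow> ('p, 'a) fm" where
  "tphi T A = And (term_fm T) (Conj (lit_fm ` phiA T A))"

definition contract_exe :: "('p, 'a) law set \<Rightarrow> ('p, 'a) fm \<Rightarrow> 'a \<Rightarrow> ('p, 'a) law set set" where
  "contract_exe \<Theta> f a =
    (if \<not> th_entails \<Theta> (law_fm (Exe f a)) then {\<Theta>}
     else {(\<Theta> - exes \<Theta> a) \<union> {Exe (And fi (Neg (tphi T A))) a | fi. Exe fi a \<in> \<Theta>} | T A.
             T \<in> IP (And (Conj (statics \<Theta>)) f) \<and> A \<subseteq> UNIV - atm T \<and>
             \<not> cpl_entails (statics \<Theta>) (Neg (tphi T A))})"

definition eff_suffices :: "('p, 'a) law set \<Rightarrow> ('p, 'a) law set \<Rightarrow> ('p, 'a) fm \<Rightarrow> 'a \<Rightarrow> ('p, 'a) fm \<Rightarrow> bool" where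
  "eff_suffices \<Theta> E' f a g = pdl_entails (statics \<Theta> \<union> law_fm ` E') (law_fm (Eff f a g))"

definition eff_minus :: "('p, 'a) law set \<Rightarrow> ('p, 'a) fm \<Rightarrow> 'a \<Rightarrow> ('p, 'a) fm \<Rightarrow> ('p, 'a) law set" where
  "eff_minus \<Theta> f a g = \<Union> {E'. E' \<subseteq> effs \<Theta> a \<and> eff_suffices \<Theta> E' f a g \<and>
                                (\<forall>E''. E'' \<subset> E' \<longrightarrow> \<not> eff_suffices \<Theta> E'' f a g)}"

definition eff_result :: "('p, 'a) law set \<Rightarrow> ('p, 'a) fm \<Rightarrow> 'a \<Rightarrow> ('p, 'a) fm \<Rightarrow>
    'p lit set \<Rightarrow> 'p set \<Rightarrow> 'p lit set \<Rightarrow> 'p lit set \<Rightarrow> ('p, 'a) law set" where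
  "eff_result \<Theta> f a g T A T' L =
    (let Em = eff_minus \<Theta> f a g; t = tphi T A in
      (\<Theta> - Em)
      \<union> {Eff (And fi (Neg t)) a gi | fi gi. Eff fi a gi \<in> Em}
      \<union> {Eff (And fi t) a (Or gi (term_fm T')) | fi gi. Eff fi a gi \<in> Em}
      \<union> {Eff (And t (lit_fm l)) a (Or g (lit_fm l)) | l. l \<in> L \<and>
            (\<not> th_entails \<Theta> (law_fm (Eff (And t (lit_fm l)) a (Neg (lit_fm l)))) \<or> l \<in> T')})"

definition contract_eff :: "('p, 'a) law set \<Rightarrow> ('p, 'a) fm \<Rightarrow> 'a \<Rightarrow> ('p, 'a) fm \<Rightarrow> ('p, 'a) law set set" where
  "contract_eff \<Theta> f a g =
    (if \<not> th_entails \<Theta> (law_fm (Eff f a g)) then {\<Theta>}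
     else {eff_result \<Theta> f a g T A T' L | T A T' L.
             T \<in> IP (And (Conj (statics \<Theta>)) f) \<and> A \<subseteq> UNIV - atm T \<and>
             \<not> cpl_entails (statics \<Theta>) (Neg (tphi T A)) \<and>
             T' \<in> IP (And (Conj (statics \<Theta>)) (Neg g)) \<and>
             cpl_entails (statics \<Theta>) (Imp (tphi T A) (Conj (lit_fm ` L))) \<and>
             \<not> cpl_entails (statics \<Theta>) (Neg (And (term_fm T') (Conj (lit_fm ` L))))})"

text \<open>Assumptions on the classical contraction operator for static laws:
  Katsuno--Mendelzon style, sound, complete and minimal w.r.t. the semantics
  "add exactly one valuation falsifying phi".\<close>
definition good_scontr :: "(('p, 'a) fm set \<Rightarrow> ('p, 'a) fm \<Rightarrow> ('p, 'a) fm set set) \<Rightarrow> bool" where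
  "good_scontr sc =
    (\<forall>S f. finite S \<and> (\<forall>s\<in>S. is_bool s) \<and> is_bool f \<and> cpl_entails S f \<longrightarrow>
       (\<forall>S'\<in>sc S f. finite S' \<and> (\<forall>s\<in>S'. is_bool s) \<and>
            (\<exists>w. \<not> bsat w f \<and> vals S' = vals S \<union> {w})) \<and>
       (\<forall>w. \<not> bsat w f \<longrightarrow> (\<exists>S'\<in>sc S f. vals S' = vals S \<union> {w})))"

definition contract_stat :: "(('p, 'a) fm set \<Rightarrow> ('p, 'a) fm \<Rightarrow> ('p, 'a) fm set set) \<Rightarrow>
    ('p, 'a) law set \<Rightarrow> ('p, 'a) fm \<Rightarrow> ('p, 'a) law set set" where
  "contract_stat sc \<Theta> f =
    (if \<not> cpl_entails (statics \<Theta>) f then {\<Theta>}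
     else {{l\<in>\<Theta>. (\<exists>g a h. l = Eff g a h)}
           \<union> Stat ` S'
           \<union> {Exe (And fi f) a | fi a. Exe fi a \<in> \<Theta>}
           \<union> range (\<lambda>a. Eff (Neg f) a FBot) | S'. S' \<in> sc (statics \<Theta>) f})"

definition contract :: "(('p, 'a) fm set \<Rightarrow> ('p, 'a) fm \<Rightarrow> ('p, 'a) fm set set) \<Rightarrow>
    ('p, 'a) law set \<Rightarrow> ('p, 'a) law \<Rightarrow> ('p, 'a) law set set" where
  "contract sc \<Theta> \<Phi> = (case \<Phi> of
       Stat f \<Rightarrow> contract_stat sc \<Theta> f
     | Eff f a g \<Rightarrow> contract_eff \<Theta> f a g
     | Exe f a \<Rightarrow> contract_exe \<Theta> f a)"

end

theory Submission
  imports Defs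
begin

lemma sat_bool: "is_bool f \<Longrightarrow> sat R w f = sat R' w f"
  by (induction f) auto

lemma bsat_sat: "is_bool f \<Longrightarrow> bsat w f = sat R w f"
  unfolding bsat_def using sat_bool by blast

lemma Conj_ex: "finite S \<Longrightarrow> \<exists>xs. set xs = S \<and> Conj S = foldr And xs FTop"
proof -
  assume "finite S"
  then have "\<exists>xs. set xs = S" by (rule finite_list)
  then have "set (SOME xs. set xs = S) = S" by (rule someI_ex)
  then show ?thesis unfolding Conj_def by blast
qed

lemma sat_foldr: "sat R w (foldr And xs FTop) = (\<forall>s\<in>set xs. sat R w s)"
  by (induction xs) auto

lemma bool_foldr: "(\<forall>s\<in>set xs. is_bool s) \<Longrightarrow> is_bool (foldr And xs FTop)"
  by (induction xs) auto

lemma sat_Conj: "finite S \<Longrightarrow> sat R w (Conj S) = (\<forall>s\<in>S. sat R w s)"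
  using Conj_ex sat_foldr by metis

lemma bool_Conj: "finite S \<Longrightarrow> \<forall>s\<in>S. is_bool s \<Longrightarrow> is_bool (Conj S)"
  using Conj_ex bool_foldr by metis

lemma bool_lit: "is_bool (lit_fm l)"
  by (cases l) auto

definition chr :: "('p::finite \<Rightarrow> bool) \<Rightarrow> ('p, 'a) fm" where
  "chr v = Conj (lit_fm ` {(p, v p) | p. True})"

lemma chr_bool: "is_bool (chr v)"
  unfolding chr_def by (rule bool_Conj) (auto simp: bool_lit)

lemma sat_chr:
  fixes v :: "'p::finite \<Rightarrow> bool"
  shows "sat R u (chr v :: ('p,'a) fm) = (u = v)"
proof -
  have fin: "finite (lit_fm ` {(p, v p) | p. True} :: ('p, 'a) fm set)" by simp
  have "sat R u (chr v) = (\<forall>p. sat R u (lit_fm (p, v p) :: ('p,'a) fm))"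
    unfolding chr_def sat_Conj[OF fin] by blast
  also have "\<dots> = (\<forall>p. u p = v p)" by auto
  finally show ?thesis by auto
qed

definition mod_th :: "('p, 'a) law set \<Rightarrow> 'p val set \<Rightarrow> ('a \<Rightarrow> ('p val \<times> 'p val) set) \<Rightarrow> bool" where
  "mod_th \<Theta> W R = (is_model W R \<and> (\<forall>l\<in>\<Theta>. valid_in W R (law_fm l)))"

lemma th_entails_mod: "th_entails \<Theta> f = (\<forall>W R. mod_th \<Theta> W R \<longrightarrow> valid_in W R f)"
  unfolding th_entails_def pdl_entails_def mod_th_def by auto

lemma modular_cover:
  fixes \<Theta> :: "('p::finite, 'a) law set"
  assumes "modular \<Theta>" "v \<in> vals (statics \<Theta>)"
  shows "\<exists>W R. mod_th \<Theta> W R \<and> v \<in> W"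
proof (rule ccontr)
  assume "\<not> ?thesis"
  then have "th_entails \<Theta> (Neg (chr v))"
    unfolding th_entails_mod valid_in_def by (auto simp: sat_chr)
  moreover have "is_bool (Neg (chr v) :: ('p, 'a) fm)" using chr_bool by simp
  ultimately have "cpl_entails (statics \<Theta>) (Neg (chr v))"
    using assms(1) unfolding modular_def by blast
  then show False using assms(2) unfolding cpl_entails_def vals_def bsat_def
    by (auto simp: sat_chr)
qed

lemma weaker_modular:
  assumes "modular \<Theta>" "statics \<Theta>' = statics \<Theta>"
    and "\<And>W R l. mod_th \<Theta> W R \<Longrightarrow> l \<in> \<Theta>' \<Longrightarrow> valid_in W R (law_fm l)"
  shows "modular \<Theta>'"
  unfolding modular_def
proof (intro allI impI)
  fix f
  assume b: "is_bool f" and e: "th_entails \<Theta>' f"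
  have "th_entails \<Theta> f"
    unfolding th_entails_mod
  proof (intro allI impI)
    fix W R assume m: "mod_th \<Theta> W R"
    have "mod_th \<Theta>' W R" using m assms(3) unfolding mod_th_def by blast
    then show "valid_in W R f" using e unfolding th_entails_mod by blast
  qed
  then show "cpl_entails (statics \<Theta>') f" using assms(1,2) b unfolding modular_def by simp
qed

lemma case_exe:
  assumes "modular \<Theta>" "\<Theta>' \<in> contract_exe \<Theta> f a"
  shows "modular \<Theta>'"
proof (cases "th_entails \<Theta> (law_fm (Exe f a))")
  case False then show ?thesis using assms unfolding contract_exe_def by simp
next
  case True
  then obtain T A where th: "\<Theta>' = (\<Theta> - exes \<Theta> a) \<union> {Exe (And fi (Neg (tphi T A))) a | fi. Exe fi a \<in> \<Theta>}"
    using assms(2) unfolding contract_exe_def by auto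
  show ?thesis
  proof (rule weaker_modular[OF assms(1)])
    show "statics \<Theta>' = statics \<Theta>" unfolding th statics_def exes_def by auto
  next
    fix W R l assume m: "mod_th \<Theta> W R" and l: "l \<in> \<Theta>'"
    show "valid_in W R (law_fm l)"
    proof (cases "l \<in> \<Theta>")
      case True then show ?thesis using m unfolding mod_th_def by blast
    next
      case False
      then obtain fi where "l = Exe (And fi (Neg (tphi T A))) a" "Exe fi a \<in> \<Theta>" using l th by auto
      then show ?thesis using m unfolding mod_th_def valid_in_def by fastforce
    qed
  qed
qed

lemma tphi_term:
  assumes "sat R w (tphi T A :: ('p::finite,'a) fm)" "l \<in> T"
  shows "bsat w (lit_fm l :: ('p,'a) fm)"
proof -
  have fin: "finite (lit_fm ` T :: ('p, 'a) fm set)" by simp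
  have "sat R w (term_fm T :: ('p,'a) fm)" using assms(1) unfolding tphi_def by simp
  then have "sat R w (lit_fm l :: ('p,'a) fm)" using assms(2) unfolding term_fm_def sat_Conj[OF fin] by blast
  then show ?thesis using bsat_sat bool_lit by metis
qed

lemma tphi_imp:
  assumes "sat R w (tphi T A :: ('p::finite,'a) fm)" "T \<in> IP (And C f)" "is_bool f"
  shows "sat R w f"
proof -
  have "\<forall>l\<in>T. bsat w (lit_fm l :: ('p,'a) fm)" using tphi_term[OF assms(1)] by blast
  then have "bsat w (And C f)" using assms(2) unfolding IP_def term_implies_def by blast
  then have "bsat w f" unfolding bsat_def by simp
  then show ?thesis using bsat_sat assms(3) by metis
qed

lemma case_eff:
  fixes \<Theta> :: "('p::finite, 'a) law set"
  assumes "modular \<Theta>" "\<Theta>' \<in> contract_eff \<Theta> f a g" "is_bool f"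
  shows "modular \<Theta>'"
proof (cases "th_entails \<Theta> (law_fm (Eff f a g))")
  case False then show ?thesis using assms unfolding contract_eff_def by simp
next
  case True
  then obtain T A T' L where th: "\<Theta>' = eff_result \<Theta> f a g T A T' L"
     and T: "T \<in> IP (And (Conj (statics \<Theta>)) f)"
    using assms(2) unfolding contract_eff_def by auto
  define Em where "Em = eff_minus \<Theta> f a g"
  define t :: "('p,'a) fm" where "t = tphi T A"
  have Em: "Em \<subseteq> effs \<Theta> a" unfolding Em_def eff_minus_def by blast
  have th2: "\<Theta>' = (\<Theta> - Em)
      \<union> {Eff (And fi (Neg t)) a gi | fi gi. Eff fi a gi \<in> Em}
      \<union> {Eff (And fi t) a (Or gi (term_fm T')) | fi gi. Eff fi a gi \<in> Em}
      \<union> {Eff (And t (lit_fm l)) a (Or g (lit_fm l)) | l. l \<in> L \<and>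
            (\<not> th_entails \<Theta> (law_fm (Eff (And t (lit_fm l)) a (Neg (lit_fm l)))) \<or> l \<in> T')}"
    unfolding th eff_result_def Em_def t_def Let_def by simp
  show ?thesis
  proof (rule weaker_modular[OF assms(1)])
    show "statics \<Theta>' = statics \<Theta>" unfolding th2 statics_def using Em unfolding effs_def by auto
  next
    fix W R l assume m: "mod_th \<Theta> W R" and l: "l \<in> \<Theta>'"
    have mv: "\<And>l. l \<in> \<Theta> \<Longrightarrow> valid_in W R (law_fm l)" using m unfolding mod_th_def by blast
    have Emv: "\<And>l. l \<in> Em \<Longrightarrow> valid_in W R (law_fm l)" using mv Em unfolding effs_def by blast
    have fg: "valid_in W R (law_fm (Eff f a g))" using True m unfolding th_entails_mod by blast
    from l th2 consider "l \<in> \<Theta>"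
      | fi gi where "l = Eff (And fi (Neg t)) a gi" "Eff fi a gi \<in> Em"
      | fi gi where "l = Eff (And fi t) a (Or gi (term_fm T'))" "Eff fi a gi \<in> Em"
      | lt where "l = Eff (And t (lit_fm lt)) a (Or g (lit_fm lt))"
      by blast
    then show "valid_in W R (law_fm l)"
    proof cases
      case 1 then show ?thesis using mv by blast
    next
      case 2 then show ?thesis using Emv[OF 2(2)] unfolding valid_in_def by auto
    next
      case 3 then show ?thesis using Emv[OF 3(2)] unfolding valid_in_def by auto
    next
      case 4
      show ?thesis unfolding valid_in_def 4
      proof
        fix w assume w: "w \<in> W"
        show "sat R w (law_fm (Eff (And t (lit_fm lt)) a (Or g (lit_fm lt))))"
        proof (simp, intro impI allI)
          assume "sat R w t \<and> sat R w (lit_fm lt)"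
          then have "sat R w f" using tphi_imp T assms(3) unfolding t_def by blast
          then have "\<forall>v. (w, v) \<in> R a \<longrightarrow> sat R v g" using fg w unfolding valid_in_def by auto
          then show "\<And>v. (w, v) \<in> R a \<Longrightarrow> sat R v g \<or> sat R v (lit_fm lt)" by blast
        qed
      qed
    qed
  qed
qed


lemma case_stat:
  fixes \<Theta> :: "('p::finite, 'a) law set"
  assumes gs: "good_scontr sc" and at: "action_theory \<Theta>" and md: "modular \<Theta>"
    and bf: "is_bool f" and mem: "\<Theta>' \<in> contract_stat sc \<Theta> f"
  shows "modular \<Theta>'"
proof (cases "cpl_entails (statics \<Theta>) f")
  case False then show ?thesis using md mem unfolding contract_stat_def by simp
next
  case True
  define S where "S = statics \<Theta>"
  obtain S' where S': "S' \<in> sc S f" and th: "\<Theta>' = {l\<in>\<Theta>. (\<exists>g a h. l = Eff g a h)}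
           \<union> Stat ` S'
           \<union> {Exe (And fi f) a | fi a. Exe fi a \<in> \<Theta>}
           \<union> range (\<lambda>a. Eff (Neg f) a FBot)"
    using mem True unfolding contract_stat_def S_def by auto
  have "S = Stat -` \<Theta>" unfolding S_def statics_def by auto
  then have finS: "finite S" using at unfolding action_theory_def
    by (simp add: finite_vimageI inj_def)
  have boolS: "\<forall>s\<in>S. is_bool s" using at unfolding action_theory_def S_def statics_def by force
  have TS: "cpl_entails S f" using True unfolding S_def .
  have gsS: "(\<forall>S'\<in>sc S f. finite S' \<and> (\<forall>s\<in>S'. is_bool s) \<and>
            (\<exists>w. \<not> bsat w f \<and> vals S' = vals S \<union> {w}))"
    using gs[unfolded good_scontr_def, THEN spec[of _ S], THEN spec[of _ f]] finS boolS bf TS by simp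
  have S'p: "finite S' \<and> (\<forall>s\<in>S'. is_bool s) \<and> (\<exists>w. \<not> bsat w f \<and> vals S' = vals S \<union> {w})"
    using gsS S' by (rule bspec)
  obtain w where nw: "\<not> bsat w f" and vS': "vals S' = vals S \<union> {w}"
    using S'p by blast
  have boolS': "\<forall>s\<in>S'. is_bool s" using S'p by blast
  have stT': "statics \<Theta>' = S'" unfolding th statics_def by auto
  define Wu where "Wu = {x. \<exists>W R. mod_th \<Theta> W R \<and> x \<in> W}"
  define Rc where "Rc = (\<lambda>a. {(x,y). x\<in>Wu \<and> y\<in>Wu \<and> (\<forall>\<phi> \<psi>. Eff \<phi> a \<psi> \<in> \<Theta> \<longrightarrow> bsat x \<phi> \<longrightarrow> bsat y \<psi>)})"
  have wf: "\<And>l. l \<in> \<Theta> \<Longrightarrow> wf_law l" using at unfolding action_theory_def by blast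
  have WuS: "x \<in> vals S" if hx: "x \<in> Wu" for x
  proof -
    obtain W R where m: "mod_th \<Theta> W R" "x \<in> W" using hx unfolding Wu_def by blast
    show ?thesis unfolding vals_def
    proof
      show "\<forall>s\<in>S. bsat x s"
      proof
        fix s assume s: "s \<in> S"
        then have "sat R x s" using m unfolding mod_th_def valid_in_def S_def statics_def by force
        then show "bsat x s" using bsat_sat boolS s by metis
      qed
    qed
  qed
  have Wuf: "bsat x f" if "x \<in> Wu" for x
    using WuS[OF that] True unfolding vals_def cpl_entails_def S_def by blast
  have wWu: "w \<notin> Wu" using Wuf nw by blast
  have Wus': "x \<in> vals S'" if "x \<in> insert w Wu" for x using that WuS vS' by auto
  have model: "mod_th \<Theta>' (insert w Wu) Rc"
    unfolding mod_th_def
  proof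
    show "is_model (insert w Wu) Rc" unfolding is_model_def Rc_def by auto
  next
    show "\<forall>l\<in>\<Theta>'. valid_in (insert w Wu) Rc (law_fm l)"
    proof
      fix l assume l: "l \<in> \<Theta>'"
      show "valid_in (insert w Wu) Rc (law_fm l)" unfolding valid_in_def
      proof
        fix x assume x: "x \<in> insert w Wu"
        from l th consider g a h where "l = Eff g a h" "l \<in> \<Theta>"
          | s where "l = Stat s" "s \<in> S'"
          | fi a where "l = Exe (And fi f) a" "Exe fi a \<in> \<Theta>"
          | a where "l = Eff (Neg f) a FBot" by blast
        then show "sat Rc x (law_fm l)"
        proof cases
          case 1
          have bg: "is_bool g" "is_bool h" using wf[OF 1(2)] 1(1) by auto
          show ?thesis unfolding 1(1)
          proof (simp, intro impI allI)
            fix v assume "sat Rc x g" "(x, v) \<in> Rc a"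
            then have "bsat v h" using 1 bg bsat_sat unfolding Rc_def by fastforce
            then show "sat Rc v h" using bsat_sat bg by metis
          qed
        next
          case 2
          have "bsat x s" using Wus'[OF x] 2 unfolding vals_def by blast
          moreover have "is_bool s" using boolS' 2 by blast
          ultimately show ?thesis using 2 bsat_sat by (metis law_fm.simps(1))
        next
          case 3
          have bfi: "is_bool fi" using wf[OF 3(2)] by simp
          have "sat Rc x fi \<and> sat Rc x f \<Longrightarrow> \<exists>v. (x, v) \<in> Rc a"
          proof -
            assume a1: "sat Rc x fi \<and> sat Rc x f"
            then have "x \<noteq> w" using nw bsat_sat bf by metis
            then have "x \<in> Wu" using x by blast
            then obtain W R where m: "mod_th \<Theta> W R" "x \<in> W" unfolding Wu_def by blast
            have "sat R x fi" using a1 sat_bool bfi by metis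
            moreover have "sat R x (law_fm (Exe fi a))" using m 3(2) unfolding mod_th_def valid_in_def by blast
            ultimately obtain y where y: "(x,y) \<in> R a" by (auto simp: Dia_def)
            have yW: "y \<in> W" using y m unfolding mod_th_def is_model_def by blast
            have "(x,y) \<in> Rc a" unfolding Rc_def
            proof (simp, intro conjI allI impI)
              show "x \<in> Wu" by fact
              show "y \<in> Wu" using m yW unfolding Wu_def by blast
            next
              fix \<phi> \<psi> assume e: "Eff \<phi> a \<psi> \<in> \<Theta>" "bsat x \<phi>"
              have b: "is_bool \<phi>" "is_bool \<psi>" using wf[OF e(1)] by auto
              have "sat R x \<phi>" using e(2) b bsat_sat by metis
              moreover have "sat R x (law_fm (Eff \<phi> a \<psi>))" using m e(1) unfolding mod_th_def valid_in_def by blast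
              ultimately have "sat R y \<psi>" using y by simp
              then show "bsat y \<psi>" using b bsat_sat by metis
            qed
            then show "\<exists>v. (x, v) \<in> Rc a" by blast
          qed
          then show ?thesis unfolding 3(1) by (auto simp: Dia_def)
        next
          case 4
          have "\<And>v. \<not> sat Rc x f \<Longrightarrow> (x, v) \<in> Rc a \<Longrightarrow> False"
          proof -
            fix v assume "\<not> sat Rc x f" "(x, v) \<in> Rc a"
            then have "x \<in> Wu" unfolding Rc_def by blast
            then have "sat Rc x f" using Wuf bsat_sat bf by metis
            then show False using \<open>\<not> sat Rc x f\<close> by blast
          qed
          then show ?thesis unfolding 4(1) by auto
        qed
      qed
    qed
  qed
  show ?thesis unfolding modular_def
  proof (intro allI impI)
    fix g assume bg: "is_bool g" and e: "th_entails \<Theta>' g"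
    have val: "valid_in (insert w Wu) Rc g" using e model unfolding th_entails_mod by blast
    show "cpl_entails (statics \<Theta>') g" unfolding cpl_entails_def stT'
    proof (intro allI impI)
      fix v assume "\<forall>s\<in>S'. bsat v s"
      then have "v \<in> vals S'" unfolding vals_def by blast
      then have "v = w \<or> v \<in> vals S" using vS' by blast
      then have "v \<in> insert w Wu"
        using modular_cover[OF md] unfolding Wu_def S_def by blast
      then have "sat Rc v g" using val unfolding valid_in_def by blast
      then show "bsat v g" using bg bsat_sat by metis
    qed
  qed
qed

theorem lemma2:
  fixes sc :: "('p::finite, 'a::finite) fm set \<Rightarrow> ('p, 'a) fm \<Rightarrow> ('p, 'a) fm set set"
    and \<Theta> \<Theta>' :: "('p, 'a) law set"
    and \<Phi> :: "('p, 'a) law"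
  assumes "good_scontr sc"
    and "action_theory \<Theta>"
    and "wf_law \<Phi>"
    and "modular \<Theta>"
    and "\<Theta>' \<in> contract sc \<Theta> \<Phi>"
  shows "modular \<Theta>'"
proof (cases \<Phi>)
  case (Stat f)
  have "\<Theta>' \<in> contract_stat sc \<Theta> f" using assms(5) unfolding contract_def Stat by simp
  moreover have "is_bool f" using assms(3) Stat by simp
  ultimately show ?thesis using case_stat[OF assms(1,2,4)] by blast
next
  case (Eff f a g)
  have "\<Theta>' \<in> contract_eff \<Theta> f a g" using assms(5) unfolding contract_def Eff by simp
  moreover have "is_bool f" using assms(3) Eff by simp
  ultimately show ?thesis using case_eff[OF assms(4)] by blast
next
  case (Exe f a)
  have "\<Theta>' \<in> contract_exe \<Theta> f a" using assms(5) unfolding contract_def Exe by simp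
  then show ?thesis using case_exe[OF assms(4)] by blast
qed

end
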